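(* Let $\mathcal H_1,\mathcal H_2$ be Hilbert spaces, let $\rho$ be a normal state on $\mathcal B(\mathcal H_2)$, and let $\Pi=\mathrm{id}\otimes\rho:\mathcal B(\mathcal H_1\otimes\mathcal H_2)\to\mathcal B(\mathcal H_1)$. Suppose $\epsilon\ge0$ and $A\in\mathcal B(\mathcal H_1\otimes\mathcal H_2)$ satisfy $\|[A,\mathbb 1\otimes B]\|\le\epsilon\|B\|$ for all $B\in\mathcal B(\mathcal H_2)$. Then $$\|\Pi(A)\otimes\mathbb 1-A\|\le2\epsilon.$$
   Context: For a normal state $\rho$ with density matrix $\rho=\sum_k\rho_k|\xi_k\rangle\langle\xi_k|$ (orthonormal $\xi_k$, $\rho_k\ge0$, $\sum_k\rho_k=1$), the map $\Pi=\mathrm{id}\otimes\rho$ is defined by $\Pi(A)=\sum_k\rho_kA_{\xi_k}$, where for a unit vector $\eta\in\mathcal H_2$, $A_\eta\in\mathcal B(\mathcal H_1)$ is defined by $\langle\phi,A_\eta\psi\rangle=\langle\phi\otimes\eta,A\,\psi\otimes\eta\rangle$ for $\phi,\psi\in\mathcal H_1$ (i.e. $\Pi$ is the partial expectation in the state $\rho$ on the second factor). *)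

theory Defs
  imports "HOL-Analysis.Analysis"
begin

text \<open>Concrete model of complex Hilbert spaces: every Hilbert space is unitarily
equivalent to l2(I) for an orthonormal-basis index set I; we take I to be a type.
The tensor product l2(I) (x) l2(J) is l2(I x J).  Operators are functions on
('i => complex); only their behaviour on l2 matters.\<close>

definition l2 :: "('i \<Rightarrow> complex) set" where
  "l2 = {f. (\<lambda>i. (cmod (f i))\<^sup>2) summable_on UNIV}"

definition l2inner :: "('i \<Rightarrow> complex) \<Rightarrow> ('i \<Rightarrow> complex) \<Rightarrow> complex" where
  "l2inner f g = (\<Sum>\<^sub>\<infinity>i. cnj (f i) * g i)"

definition l2norm :: "('i \<Rightarrow> complex) \<Rightarrow> real" where
  "l2norm f = sqrt (\<Sum>\<^sub>\<infinity>i. (cmod (f i))\<^sup>2)"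

definition bounded_op :: "(('i \<Rightarrow> complex) \<Rightarrow> ('i \<Rightarrow> complex)) \<Rightarrow> bool" where
  "bounded_op T \<longleftrightarrow>
     (\<forall>f\<in>l2. T f \<in> l2) \<and>
     (\<forall>f\<in>l2. \<forall>g\<in>l2. T (\<lambda>i. f i + g i) = (\<lambda>i. T f i + T g i)) \<and>
     (\<forall>f\<in>l2. \<forall>c. T (\<lambda>i. c * f i) = (\<lambda>i. c * T f i)) \<and>
     (\<exists>C. \<forall>f\<in>l2. l2norm (T f) \<le> C * l2norm f)"

definition opnorm :: "(('i \<Rightarrow> complex) \<Rightarrow> ('j \<Rightarrow> complex)) \<Rightarrow> real" where
  "opnorm T = Sup {l2norm (T f) | f. f \<in> l2 \<and> l2norm f \<le> 1}"

definition id_tensor :: "(('j \<Rightarrow> complex) \<Rightarrow> ('j \<Rightarrow> complex))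
    \<Rightarrow> ('i \<times> 'j \<Rightarrow> complex) \<Rightarrow> ('i \<times> 'j \<Rightarrow> complex)" where
  "id_tensor B f = (\<lambda>(i, j). B (\<lambda>j'. f (i, j')) j)"

definition tensor_id :: "(('i \<Rightarrow> complex) \<Rightarrow> ('i \<Rightarrow> complex))
    \<Rightarrow> ('i \<times> 'j \<Rightarrow> complex) \<Rightarrow> ('i \<times> 'j \<Rightarrow> complex)" where
  "tensor_id C f = (\<lambda>(i, j). C (\<lambda>i'. f (i', j)) i)"

text \<open>A_eta: <phi, A_eta psi> = <phi (x) eta, A (psi (x) eta)>, i.e.
  (A_eta psi) i = sum_j conj(eta j) * (A (psi (x) eta)) (i, j).\<close>
definition partial_vec :: "(('i \<times> 'j \<Rightarrow> complex) \<Rightarrow> ('i \<times> 'j \<Rightarrow> complex))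
    \<Rightarrow> ('j \<Rightarrow> complex) \<Rightarrow> ('i \<Rightarrow> complex) \<Rightarrow> ('i \<Rightarrow> complex)" where
  "partial_vec A \<eta> \<psi> = (\<lambda>i. \<Sum>\<^sub>\<infinity>j. cnj (\<eta> j) * A (\<lambda>(i', j'). \<psi> i' * \<eta> j') (i, j))"

text \<open>Pi = id (x) rho for rho = sum_{k in K} rho_k |xi_k><xi_k|:
  Pi(A) = sum_{k in K} rho_k A_{xi_k}.\<close>
definition partial_state :: "('k \<Rightarrow> real) \<Rightarrow> ('k \<Rightarrow> 'j \<Rightarrow> complex) \<Rightarrow> 'k set
    \<Rightarrow> (('i \<times> 'j \<Rightarrow> complex) \<Rightarrow> ('i \<times> 'j \<Rightarrow> complex))
    \<Rightarrow> ('i \<Rightarrow> complex) \<Rightarrow> ('i \<Rightarrow> complex)" where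
  "partial_state \<rho> \<xi> K A \<psi> =
     (\<lambda>i. \<Sum>\<^sub>\<infinity>k\<in>K. complex_of_real (\<rho> k) * partial_vec A (\<xi> k) \<psi> i)"

end

theory Submission
  imports Defs
begin


definition ns :: "('i \<Rightarrow> complex) \<Rightarrow> real" where
  "ns f = (\<Sum>\<^sub>\<infinity>x. (cmod (f x))\<^sup>2)"

lemma l2_iff: "f \<in> l2 \<longleftrightarrow> (\<lambda>x. (cmod (f x))\<^sup>2) summable_on UNIV"
  by (simp add: l2_def)

lemma l2norm_ns: "l2norm f = sqrt (ns f)"
  by (simp add: l2norm_def ns_def)

lemma ns_nonneg: "ns f \<ge> 0"
  unfolding ns_def by (rule infsum_nonneg) auto

lemma l2norm_nonneg: "l2norm f \<ge> 0"
  by (simp add: l2norm_ns ns_nonneg)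

lemma l2norm_sq: "(l2norm f)\<^sup>2 = ns f"
  by (simp add: l2norm_ns ns_nonneg)

lemma ns_scale: "ns (\<lambda>x. c * f x) = (cmod c)\<^sup>2 * ns f"
  unfolding ns_def by (simp add: norm_mult power_mult_distrib infsum_cmult_right')

lemma l2norm_scale: "l2norm (\<lambda>x. c * f x) = cmod c * l2norm f"
  by (simp add: l2norm_ns ns_scale real_sqrt_mult)

lemma l2_scale: "f \<in> l2 \<Longrightarrow> (\<lambda>x. c * f x) \<in> l2"
  unfolding l2_iff by (simp add: norm_mult power_mult_distrib summable_on_cmult_right)

lemma l2_zero[simp]: "(\<lambda>x. 0) \<in> l2"
  unfolding l2_iff by simp

lemma ns_zero[simp]: "ns (\<lambda>x. 0) = 0"
  unfolding ns_def by simp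

lemma l2norm_zero[simp]: "l2norm (\<lambda>x. 0) = 0"
  by (simp add: l2norm_ns)

lemma sq_diff_le: "(cmod (a - b))\<^sup>2 \<le> 2 * (cmod a)\<^sup>2 + 2 * (cmod b)\<^sup>2"
proof -
  have "cmod (a - b) \<le> cmod a + cmod b" by (rule norm_triangle_ineq4)
  hence "(cmod (a - b))\<^sup>2 \<le> (cmod a + cmod b)\<^sup>2" by (simp add: power_mono)
  also have "\<dots> \<le> 2 * (cmod a)\<^sup>2 + 2 * (cmod b)\<^sup>2"
    by (smt (verit) sum_squares_bound power2_sum)
  finally show ?thesis .
qed

lemma sq_add_le: "(cmod (a + b))\<^sup>2 \<le> 2 * (cmod a)\<^sup>2 + 2 * (cmod b)\<^sup>2"
  using sq_diff_le[of a "-b"] by simp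

lemma l2_diff: "f \<in> l2 \<Longrightarrow> g \<in> l2 \<Longrightarrow> (\<lambda>x. f x - g x) \<in> l2"
  unfolding l2_iff
  by (rule summable_on_comparison_test[of "\<lambda>x. 2 * (cmod (f x))\<^sup>2 + 2 * (cmod (g x))\<^sup>2"])
     (auto intro!: summable_on_add summable_on_cmult_right sq_diff_le)

lemma l2_add: "f \<in> l2 \<Longrightarrow> g \<in> l2 \<Longrightarrow> (\<lambda>x. f x + g x) \<in> l2"
  unfolding l2_iff
  by (rule summable_on_comparison_test[of "\<lambda>x. 2 * (cmod (f x))\<^sup>2 + 2 * (cmod (g x))\<^sup>2"])
     (auto intro!: summable_on_add summable_on_cmult_right sq_add_le)

lemma ns_diff_le: "f \<in> l2 \<Longrightarrow> g \<in> l2 \<Longrightarrow> ns (\<lambda>x. f x - g x) \<le> 2 * ns f + 2 * ns g"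
proof -
  assume f: "f \<in> l2" and g: "g \<in> l2"
  have "ns (\<lambda>x. f x - g x) \<le> (\<Sum>\<^sub>\<infinity>x. 2 * (cmod (f x))\<^sup>2 + 2 * (cmod (g x))\<^sup>2)"
    unfolding ns_def
    apply (rule infsum_mono)
    using l2_diff[OF f g] f g by (auto simp: l2_iff intro!: summable_on_add summable_on_cmult_right sq_diff_le)
  also have "\<dots> = 2 * ns f + 2 * ns g"
    unfolding ns_def using f g
    by (subst infsum_add) (auto simp: l2_iff infsum_cmult_right' intro!: summable_on_cmult_right)
  finally show ?thesis .
qed

lemma sum_sq_le_ns: "f \<in> l2 \<Longrightarrow> finite G \<Longrightarrow> (\<Sum>x\<in>G. (cmod (f x))\<^sup>2) \<le> ns f"
  unfolding ns_def l2_iff by (rule finite_sum_le_infsum) auto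

lemma finite_CS:
  assumes "finite G" "w \<in> l2"
  shows "cmod (\<Sum>x\<in>G. cnj (\<phi> x) * w x) \<le> sqrt (\<Sum>x\<in>G. (cmod (\<phi> x))\<^sup>2) * l2norm w"
proof -
  have "cmod (\<Sum>x\<in>G. cnj (\<phi> x) * w x) \<le> (\<Sum>x\<in>G. cmod (cnj (\<phi> x) * w x))"
    by (rule norm_sum)
  also have "\<dots> = (\<Sum>x\<in>G. \<bar>cmod (\<phi> x)\<bar> * \<bar>cmod (w x)\<bar>)" by (simp add: norm_mult)
  also have "\<dots> \<le> L2_set (\<lambda>x. cmod (\<phi> x)) G * L2_set (\<lambda>x. cmod (w x)) G"
    by (rule L2_set_mult_ineq)
  also have "\<dots> \<le> sqrt (\<Sum>x\<in>G. (cmod (\<phi> x))\<^sup>2) * l2norm w"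
    unfolding L2_set_def l2norm_ns
    by (rule mult_left_mono) (use sum_sq_le_ns[OF assms(2,1)] in \<open>auto intro: sum_nonneg\<close>)
  finally show ?thesis .
qed

lemma ns_le_finite:
  assumes "\<And>G. finite G \<Longrightarrow> (\<Sum>x\<in>G. (cmod (v x))\<^sup>2) \<le> b" "b \<ge> 0"
  shows "ns v \<le> b"
proof (cases "(\<lambda>x. (cmod (v x))\<^sup>2) summable_on UNIV")
  case True
  show ?thesis unfolding ns_def by (rule infsum_le_finite_sums[OF True]) (use assms in auto)
next
  case False
  then show ?thesis unfolding ns_def using assms(2) by (simp add: infsum_not_exists)
qed

lemma opnorm_le:
  assumes "\<And>f. f \<in> l2 \<Longrightarrow> l2norm f \<le> 1 \<Longrightarrow> l2norm (T f) \<le> c"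
  shows "opnorm T \<le> c"
  unfolding opnorm_def
  by (rule cSup_least) (use assms in \<open>auto intro: exI[of _ "\<lambda>x. 0"]\<close>)

lemma opnorm_apply:
  assumes hom: "\<And>f c. f \<in> l2 \<Longrightarrow> T (\<lambda>x. c * f x) = (\<lambda>x. c * T f x)"
    and bnd: "\<And>f. f \<in> l2 \<Longrightarrow> l2norm (T f) \<le> C * l2norm f"
    and f: "f \<in> l2"
  shows "l2norm (T f) \<le> opnorm T * l2norm f"
proof (cases "l2norm f = 0")
  case True
  then show ?thesis using bnd[OF f] l2norm_nonneg[of "T f"] by simp
next
  case False
  hence pos: "l2norm f > 0" using l2norm_nonneg[of f] by simp
  define g where "g = (\<lambda>x. complex_of_real (1 / l2norm f) * f x)"
  have g2: "g \<in> l2" unfolding g_def by (rule l2_scale[OF f])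
  have gn: "l2norm g = 1" unfolding g_def l2norm_scale using pos by (simp add: norm_divide)
  have bdd: "bdd_above {l2norm (T h) | h. h \<in> l2 \<and> l2norm h \<le> 1}"
  proof (rule bdd_aboveI[of _ "\<bar>C\<bar>"], safe)
    fix h :: "'a \<Rightarrow> complex" assume h: "h \<in> l2" "l2norm h \<le> 1"
    have "l2norm (T h) \<le> C * l2norm h" using bnd[OF h(1)] .
    also have "\<dots> \<le> \<bar>C\<bar> * l2norm h" by (rule mult_right_mono) (auto simp: l2norm_nonneg)
    also have "\<dots> \<le> \<bar>C\<bar>" using h(2) l2norm_nonneg[of h] by (simp add: mult_left_le)
    finally show "l2norm (T h) \<le> \<bar>C\<bar>" .
  qed
  have "l2norm (T g) \<le> opnorm T" unfolding opnorm_def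
    by (rule cSup_upper[OF _ bdd]) (use g2 gn in auto)
  have "f = (\<lambda>x. complex_of_real (l2norm f) * g x)" unfolding g_def using pos by auto
  hence "T f = (\<lambda>x. complex_of_real (l2norm f) * T g x)" using hom[OF g2] by metis
  hence "l2norm (T f) = l2norm f * l2norm (T g)" by (simp add: l2norm_scale l2norm_nonneg)
  also have "\<dots> \<le> l2norm f * opnorm T" using \<open>l2norm (T g) \<le> opnorm T\<close> pos by simp
  finally show ?thesis by (simp add: mult.commute)
qed



lemma fub_D:
  fixes g :: "'a \<times> 'b \<Rightarrow> real"
  assumes "g summable_on UNIV"
  shows "(\<lambda>j. g (i, j)) summable_on UNIV"
    and "(\<lambda>i. \<Sum>\<^sub>\<infinity>j. g (i, j)) summable_on UNIV"
    and "infsum g UNIV = (\<Sum>\<^sub>\<infinity>i. \<Sum>\<^sub>\<infinity>j. g (i, j))"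
proof -
  have s: "g summable_on (UNIV \<times> UNIV)" using assms by simp
  have s': "(\<lambda>(x,y). (\<lambda>i j. g (i,j)) x y) summable_on (UNIV \<times> UNIV)" using s by simp
  show r: "(\<lambda>j. g (i, j)) summable_on UNIV"
    using summable_on_SigmaD1[OF s', of i] by simp
  show "(\<lambda>i. \<Sum>\<^sub>\<infinity>j. g (i, j)) summable_on UNIV"
    using summable_on_SigmaD[OF s] summable_on_SigmaD1[OF s'] by auto
  show "infsum g UNIV = (\<Sum>\<^sub>\<infinity>i. \<Sum>\<^sub>\<infinity>j. g (i, j))"
    using infsum_Sigma_banach[OF s] by simp
qed

lemma fub_I:
  fixes g :: "'a \<times> 'b \<Rightarrow> real"
  assumes "\<And>i. (\<lambda>j. g (i, j)) summable_on UNIV"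
    and "(\<lambda>i. \<Sum>\<^sub>\<infinity>j. g (i, j)) summable_on UNIV"
    and "\<And>x. g x \<ge> 0"
  shows "g summable_on UNIV"
proof -
  have "g summable_on (UNIV \<times> UNIV)"
    by (rule summable_on_SigmaI[OF _ assms(2)]) (use assms in auto)
  thus ?thesis by simp
qed

lemma swap_summable:
  fixes g :: "'a \<times> 'b \<Rightarrow> real"
  shows "g summable_on UNIV \<longleftrightarrow> (\<lambda>(j,i). g (i,j)) summable_on UNIV"
proof -
  have "g summable_on UNIV \<longleftrightarrow> g summable_on (prod.swap ` UNIV)" by simp
  also have "\<dots> \<longleftrightarrow> (g \<circ> prod.swap) summable_on UNIV" by (rule summable_on_reindex) simp
  finally show ?thesis by (simp add: comp_def case_prod_unfold prod.swap_def)
qed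

lemma swap_infsum:
  fixes g :: "'a \<times> 'b \<Rightarrow> real"
  shows "infsum g UNIV = infsum (\<lambda>(j,i). g (i,j)) UNIV"
proof -
  have "infsum g UNIV = infsum g (prod.swap ` UNIV)" by simp
  also have "\<dots> = infsum (g \<circ> prod.swap) UNIV" by (rule infsum_reindex) simp
  finally show ?thesis by (simp add: comp_def case_prod_unfold prod.swap_def)
qed

lemma row_l2: "h \<in> l2 \<Longrightarrow> (\<lambda>j. h (i, j)) \<in> l2"
  unfolding l2_iff using fub_D(1)[of "\<lambda>x. (cmod (h x))\<^sup>2"] by auto

lemma ns_rows: "h \<in> l2 \<Longrightarrow> ns h = (\<Sum>\<^sub>\<infinity>i. ns (\<lambda>j. h (i, j)))"
  unfolding l2_iff ns_def using fub_D(3)[of "\<lambda>x. (cmod (h x))\<^sup>2"] by auto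

lemma ns_rows_summable: "h \<in> l2 \<Longrightarrow> (\<lambda>i. ns (\<lambda>j. h (i, j))) summable_on UNIV"
  unfolding l2_iff ns_def using fub_D(2)[of "\<lambda>x. (cmod (h x))\<^sup>2"] by auto

lemma col_l2: "h \<in> l2 \<Longrightarrow> (\<lambda>i. h (i, j)) \<in> l2"
  unfolding l2_iff
  using fub_D(1)[of "\<lambda>(j,i). (cmod (h (i,j)))\<^sup>2" j] swap_summable[of "\<lambda>x. (cmod (h x))\<^sup>2"]
  by auto

lemma ns_cols: "h \<in> l2 \<Longrightarrow> ns h = (\<Sum>\<^sub>\<infinity>j. ns (\<lambda>i. h (i, j)))"
  unfolding l2_iff ns_def
  using fub_D(3)[of "\<lambda>(j,i). (cmod (h (i,j)))\<^sup>2"] swap_summable[of "\<lambda>x. (cmod (h x))\<^sup>2"]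
    swap_infsum[of "\<lambda>x. (cmod (h x))\<^sup>2"]
  by auto

lemma ns_cols_summable: "h \<in> l2 \<Longrightarrow> (\<lambda>j. ns (\<lambda>i. h (i, j))) summable_on UNIV"
  unfolding l2_iff ns_def
  using fub_D(2)[of "\<lambda>(j,i). (cmod (h (i,j)))\<^sup>2"] swap_summable[of "\<lambda>x. (cmod (h x))\<^sup>2"]
  by auto

lemma cols_sum_le: "h \<in> l2 \<Longrightarrow> finite F \<Longrightarrow> (\<Sum>j\<in>F. ns (\<lambda>i. h (i, j))) \<le> ns h"
  using ns_cols[of h] ns_cols_summable[of h]
  by (auto intro!: finite_sum_le_infsum ns_nonneg)

lemma bounded_op_bound:
  assumes "bounded_op B"
  obtains C where "C \<ge> 0" "\<And>f. f \<in> l2 \<Longrightarrow> ns (B f) \<le> C * ns f"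
proof -
  obtain C where C: "\<And>f. f \<in> l2 \<Longrightarrow> l2norm (B f) \<le> C * l2norm f"
    using assms unfolding bounded_op_def by blast
  have "ns (B f) \<le> C\<^sup>2 * ns f" if f: "f \<in> l2" for f
  proof -
    have "C * l2norm f \<le> \<bar>C\<bar> * l2norm f" by (rule mult_right_mono) (auto simp: l2norm_nonneg)
    hence "l2norm (B f) \<le> \<bar>C\<bar> * l2norm f"
      using C[OF f] by linarith
    hence "(l2norm (B f))\<^sup>2 \<le> (\<bar>C\<bar> * l2norm f)\<^sup>2"
      by (rule power_mono) (simp add: l2norm_nonneg)
    thus ?thesis by (simp add: l2norm_sq power_mult_distrib)
  qed
  thus ?thesis using that[of "C\<^sup>2"] by auto
qed

lemma bounded_op_l2: "bounded_op B \<Longrightarrow> f \<in> l2 \<Longrightarrow> B f \<in> l2"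
  unfolding bounded_op_def by blast

lemma bounded_op_hom: "bounded_op B \<Longrightarrow> f \<in> l2 \<Longrightarrow> B (\<lambda>x. c * f x) = (\<lambda>x. c * B f x)"
  unfolding bounded_op_def by blast

lemma bounded_op_add: "bounded_op B \<Longrightarrow> f \<in> l2 \<Longrightarrow> g \<in> l2 \<Longrightarrow> B (\<lambda>x. f x + g x) = (\<lambda>x. B f x + B g x)"
  unfolding bounded_op_def by blast

lemma id_tensor_l2:
  assumes B: "bounded_op B" and h: "h \<in> l2"
    and C: "C \<ge> 0" "\<And>f. f \<in> l2 \<Longrightarrow> ns (B f) \<le> C * ns f"
  shows "id_tensor B h \<in> l2" "ns (id_tensor B h) \<le> C * ns h"
proof -
  let ?g = "\<lambda>x. (cmod (id_tensor B h x))\<^sup>2"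
  have rowsB: "(\<lambda>j. id_tensor B h (i, j)) = B (\<lambda>j. h (i, j))" for i
    by (simp add: id_tensor_def)
  have rowsB': "id_tensor B h (i, j) = B (\<lambda>j. h (i, j)) j" for i j
    by (simp add: id_tensor_def)
  have rl2: "B (\<lambda>j. h (i, j)) \<in> l2" for i by (rule bounded_op_l2[OF B row_l2[OF h]])
  have sum1: "(\<lambda>i. C * ns (\<lambda>j. h (i, j))) summable_on UNIV"
    by (rule summable_on_cmult_right[OF ns_rows_summable[OF h]])
  have sum2: "(\<lambda>i. ns (B (\<lambda>j. h (i, j)))) summable_on UNIV"
    by (rule summable_on_comparison_test[OF sum1]) (auto intro: C(2)[OF row_l2[OF h]] ns_nonneg)
  have "?g summable_on UNIV"
    by (rule fub_I) (use rl2 sum2 in \<open>auto simp: rowsB' l2_iff ns_def\<close>)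
  thus l: "id_tensor B h \<in> l2" by (simp add: l2_iff)
  have "ns (id_tensor B h) = (\<Sum>\<^sub>\<infinity>i. ns (B (\<lambda>j. h (i, j))))"
    using ns_rows[OF l] by (simp add: rowsB)
  also have "\<dots> \<le> (\<Sum>\<^sub>\<infinity>i. C * ns (\<lambda>j. h (i, j)))"
    by (rule infsum_mono[OF sum2 sum1]) (rule C(2)[OF row_l2[OF h]])
  also have "\<dots> = C * ns h" by (simp add: infsum_cmult_right' ns_rows[OF h])
  finally show "ns (id_tensor B h) \<le> C * ns h" .
qed

lemma id_tensor_hom:
  assumes B: "bounded_op B" and h: "h \<in> l2"
  shows "id_tensor B (\<lambda>x. c * h x) = (\<lambda>x. c * id_tensor B h x)"
proof -
  have "B (\<lambda>j. c * h (i, j)) = (\<lambda>j. c * B (\<lambda>j. h (i, j)) j)" for i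
    using bounded_op_hom[OF B row_l2[OF h]] .
  thus ?thesis unfolding id_tensor_def by (auto simp: fun_eq_iff)
qed

lemma tens_l2:
  assumes u: "u \<in> l2" and v: "v \<in> l2"
  shows "(\<lambda>(i,j). u i * v j) \<in> l2" and "ns (\<lambda>(i,j). u i * v j) = ns u * ns v"
proof -
  have rows: "(\<lambda>j. (cmod (u i * v j))\<^sup>2) = (\<lambda>j. (cmod (u i))\<^sup>2 * (cmod (v j))\<^sup>2)" for i
    by (simp add: norm_mult power_mult_distrib)
  have rs: "(\<lambda>j. (cmod (u i * v j))\<^sup>2) summable_on UNIV" for i
    unfolding rows using v by (auto simp: l2_iff intro: summable_on_cmult_right)
  have ri: "(\<Sum>\<^sub>\<infinity>j. (cmod (u i * v j))\<^sup>2) = (cmod (u i))\<^sup>2 * ns v" for i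
    unfolding rows ns_def by (simp add: infsum_cmult_right')
  have s: "(\<lambda>x. (cmod ((\<lambda>(i,j). u i * v j) x))\<^sup>2) summable_on UNIV"
    by (rule fub_I) (use rs u in \<open>auto simp: ri l2_iff intro: summable_on_cmult_left\<close>)
  thus "(\<lambda>(i,j). u i * v j) \<in> l2" by (simp add: l2_iff)
  show "ns (\<lambda>(i,j). u i * v j) = ns u * ns v"
    unfolding ns_def fub_D(3)[OF s] by (simp add: ri[unfolded ns_def] infsum_cmult_left')
qed



lemma commutator_bound:
  fixes A :: "('a \<times> 'b \<Rightarrow> complex) \<Rightarrow> ('a \<times> 'b \<Rightarrow> complex)"
  assumes A: "bounded_op A" and B: "bounded_op B"
    and H: "\<forall>B :: ('b \<Rightarrow> complex) \<Rightarrow> ('b \<Rightarrow> complex). bounded_op B \<longrightarrow>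
           opnorm (\<lambda>f x. A (id_tensor B f) x - id_tensor B (A f) x) \<le> \<epsilon> * opnorm B"
    and f: "f \<in> l2"
  shows "l2norm (\<lambda>x. A (id_tensor B f) x - id_tensor B (A f) x) \<le> \<epsilon> * opnorm B * l2norm f"
proof -
  obtain CA where CA: "CA \<ge> 0" "\<And>f. f \<in> l2 \<Longrightarrow> ns (A f) \<le> CA * ns f"
    using bounded_op_bound[OF A] by blast
  obtain CB where CB: "CB \<ge> 0" "\<And>f. f \<in> l2 \<Longrightarrow> ns (B f) \<le> CB * ns f"
    using bounded_op_bound[OF B] by blast
  let ?T = "\<lambda>f x. A (id_tensor B f) x - id_tensor B (A f) x"
  have hom: "?T (\<lambda>x. c * f x) = (\<lambda>x. c * ?T f x)" if f: "f \<in> l2" for f c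
  proof -
    have "id_tensor B (\<lambda>x. c * f x) = (\<lambda>x. c * id_tensor B f x)" by (rule id_tensor_hom[OF B f])
    moreover have "A (\<lambda>x. c * id_tensor B f x) = (\<lambda>x. c * A (id_tensor B f) x)"
      by (rule bounded_op_hom[OF A id_tensor_l2(1)[OF B f CB]])
    moreover have "A (\<lambda>x. c * f x) = (\<lambda>x. c * A f x)" by (rule bounded_op_hom[OF A f])
    moreover have "id_tensor B (\<lambda>x. c * A f x) = (\<lambda>x. c * id_tensor B (A f) x)"
      by (rule id_tensor_hom[OF B bounded_op_l2[OF A f]])
    ultimately show ?thesis by (simp add: right_diff_distrib)
  qed
  have bnd: "l2norm (?T f) \<le> sqrt (4 * CA * CB) * l2norm f" if f: "f \<in> l2" for f
  proof -
    have l1: "id_tensor B f \<in> l2" by (rule id_tensor_l2(1)[OF B f CB])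
    have l2': "A f \<in> l2" by (rule bounded_op_l2[OF A f])
    have "ns (?T f) \<le> 2 * ns (A (id_tensor B f)) + 2 * ns (id_tensor B (A f))"
      by (rule ns_diff_le[OF bounded_op_l2[OF A l1] id_tensor_l2(1)[OF B l2' CB]])
    also have "\<dots> \<le> 2 * (CA * (CB * ns f)) + 2 * (CB * (CA * ns f))"
    proof -
      have "ns (A (id_tensor B f)) \<le> CA * ns (id_tensor B f)" by (rule CA(2)[OF l1])
      also have "\<dots> \<le> CA * (CB * ns f)" by (rule mult_left_mono[OF id_tensor_l2(2)[OF B f CB] CA(1)])
      finally have 1: "ns (A (id_tensor B f)) \<le> CA * (CB * ns f)" .
      have "ns (id_tensor B (A f)) \<le> CB * ns (A f)" by (rule id_tensor_l2(2)[OF B l2' CB])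
      also have "\<dots> \<le> CB * (CA * ns f)" by (rule mult_left_mono[OF CA(2)[OF f] CB(1)])
      finally show ?thesis using 1 by linarith
    qed
    also have "\<dots> = 4 * CA * CB * ns f" by simp
    finally have "ns (?T f) \<le> 4 * CA * CB * ns f" .
    hence "sqrt (ns (?T f)) \<le> sqrt (4 * CA * CB * ns f)" by (rule real_sqrt_le_mono)
    thus ?thesis by (simp add: l2norm_ns real_sqrt_mult)
  qed
  have "l2norm (?T f) \<le> opnorm ?T * l2norm f" by (rule opnorm_apply[OF hom bnd f])
  also have "\<dots> \<le> \<epsilon> * opnorm B * l2norm f"
    by (rule mult_right_mono) (use H B in \<open>auto simp: l2norm_nonneg\<close>)
  finally show ?thesis .
qed

definition fl :: "'b set \<Rightarrow> ('b \<Rightarrow> complex) \<Rightarrow> ('b \<Rightarrow> complex)" where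
  "fl S g = (\<lambda>j. (if j \<in> S then -1 else 1) * g j)"

lemma fl_sq: "(\<lambda>x. (cmod (fl S g x))\<^sup>2) = (\<lambda>x. (cmod (g x))\<^sup>2)"
  unfolding fl_def by (auto simp: norm_mult fun_eq_iff)

lemma ns_fl: "ns (fl S g) = ns g"
  unfolding ns_def by (simp only: fl_sq)

lemma l2_fl: "g \<in> l2 \<Longrightarrow> fl S g \<in> l2"
  unfolding l2_iff by (simp only: fl_sq)

lemma bounded_fl: "bounded_op (fl S)"
  unfolding bounded_op_def
proof (intro conjI ballI allI)
  show "\<exists>C. \<forall>f\<in>l2. l2norm (fl S f) \<le> C * l2norm f"
    by (rule exI[of _ 1]) (simp add: l2norm_ns ns_fl)
  show "fl S f \<in> l2" if "f \<in> l2" for f using l2_fl[OF that] .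
qed (auto simp: fl_def fun_eq_iff algebra_simps)

lemma opnorm_fl: "opnorm (fl S) \<le> 1"
  by (rule opnorm_le) (simp add: l2norm_ns ns_fl)

lemma id_tensor_fl: "id_tensor (fl S) h = (\<lambda>x. (if snd x \<in> S then -1 else 1) * h x)"
  unfolding id_tensor_def fl_def by (auto simp: fun_eq_iff)

lemma l2_prod_abs:
  assumes f: "f \<in> l2" and g: "g \<in> l2"
  shows "(\<lambda>x. cmod (f x) * cmod (g x)) summable_on UNIV"
    and "(\<Sum>\<^sub>\<infinity>x. cmod (f x) * cmod (g x)) \<le> l2norm f * l2norm g"
proof -
  have fin: "(\<Sum>x\<in>G. cmod (f x) * cmod (g x)) \<le> l2norm f * l2norm g" if "finite G" for G
  proof -
    have "(\<Sum>x\<in>G. cmod (f x) * cmod (g x)) = (\<Sum>x\<in>G. \<bar>cmod (f x)\<bar> * \<bar>cmod (g x)\<bar>)" by simp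
    also have "\<dots> \<le> L2_set (\<lambda>x. cmod (f x)) G * L2_set (\<lambda>x. cmod (g x)) G"
      by (rule L2_set_mult_ineq)
    also have "\<dots> \<le> l2norm f * l2norm g"
      unfolding L2_set_def l2norm_ns
      by (rule mult_mono) (use sum_sq_le_ns[OF f that] sum_sq_le_ns[OF g that] in \<open>auto simp: ns_nonneg intro: sum_nonneg\<close>)
    finally show ?thesis .
  qed
  show s: "(\<lambda>x. cmod (f x) * cmod (g x)) summable_on UNIV"
    by (rule nonneg_bdd_above_summable_on) (use fin in \<open>auto intro!: bdd_aboveI\<close>)
  show "(\<Sum>\<^sub>\<infinity>x. cmod (f x) * cmod (g x)) \<le> l2norm f * l2norm g"
    by (rule infsum_le_finite_sums[OF s fin])
qed

lemma l2inner_summable: "f \<in> l2 \<Longrightarrow> g \<in> l2 \<Longrightarrow> (\<lambda>x. cnj (f x) * g x) summable_on UNIV"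
  by (rule abs_summable_summable) (use l2_prod_abs(1)[of f g] in \<open>simp add: norm_mult\<close>)

lemma l2inner_CS: "f \<in> l2 \<Longrightarrow> g \<in> l2 \<Longrightarrow> cmod (l2inner f g) \<le> l2norm f * l2norm g"
proof -
  assume f: "f \<in> l2" and g: "g \<in> l2"
  have "cmod (l2inner f g) \<le> (\<Sum>\<^sub>\<infinity>x. norm (cnj (f x) * g x))"
    unfolding l2inner_def
    by (rule norm_infsum_bound) (use l2_prod_abs(1)[OF f g] in \<open>simp add: norm_mult\<close>)
  also have "\<dots> \<le> l2norm f * l2norm g" using l2_prod_abs(2)[OF f g] by (simp add: norm_mult)
  finally show ?thesis .
qed

lemma l2inner_add: "f \<in> l2 \<Longrightarrow> g \<in> l2 \<Longrightarrow> h \<in> l2 \<Longrightarrow>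
   l2inner f (\<lambda>x. g x + h x) = l2inner f g + l2inner f h"
  unfolding l2inner_def
  by (simp add: distrib_left infsum_add l2inner_summable)

lemma l2inner_scale: "l2inner f (\<lambda>x. c * g x) = c * l2inner f g"
  unfolding l2inner_def
  by (simp add: infsum_cmult_right'[symmetric] algebra_simps)

lemma infsum_single: "(\<Sum>\<^sub>\<infinity>j. if j = a then c else (0::'c::{comm_monoid_add,t2_space})) = c"
proof -
  have "(\<Sum>\<^sub>\<infinity>j. if j = a then c else (0::'c)) = infsum (\<lambda>j. if j = a then c else 0) {a}"
    by (rule infsum_cong_neutral) auto
  thus ?thesis by simp
qed

lemma summable_single: "(\<lambda>j. if j = a then c else (0::'c::{comm_monoid_add,topological_space})) summable_on UNIV"
  by (rule finite_nonzero_values_imp_summable_on) (auto intro: finite_subset[of _ "{a}"])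

definition r1 :: "('b \<Rightarrow> complex) \<Rightarrow> 'b \<Rightarrow> ('b \<Rightarrow> complex) \<Rightarrow> ('b \<Rightarrow> complex)" where
  "r1 \<xi> a g = (\<lambda>j. if j = a then l2inner \<xi> g else 0)"

lemma ns_r1: "ns (r1 \<xi> a g) = (cmod (l2inner \<xi> g))\<^sup>2"
proof -
  have "ns (r1 \<xi> a g) = (\<Sum>\<^sub>\<infinity>j. if j = a then (cmod (l2inner \<xi> g))\<^sup>2 else 0)"
    unfolding ns_def r1_def by (rule infsum_cong) auto
  thus ?thesis by (simp add: infsum_single)
qed

lemma l2_r1: "r1 \<xi> a g \<in> l2"
proof -
  have "(\<lambda>j. (cmod (r1 \<xi> a g j))\<^sup>2) = (\<lambda>j. if j = a then (cmod (l2inner \<xi> g))\<^sup>2 else 0)"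
    unfolding r1_def by auto
  thus ?thesis unfolding l2_iff by (simp add: summable_single)
qed

lemma bounded_r1:
  assumes xi: "\<xi> \<in> l2" "ns \<xi> = 1"
  shows "bounded_op (r1 \<xi> a)" and "opnorm (r1 \<xi> a) \<le> 1"
proof -
  have nb: "l2norm (r1 \<xi> a f) \<le> l2norm f" if "f \<in> l2" for f
  proof -
    have "l2norm (r1 \<xi> a f) = cmod (l2inner \<xi> f)" by (simp add: l2norm_ns ns_r1)
    also have "\<dots> \<le> l2norm \<xi> * l2norm f" by (rule l2inner_CS[OF xi(1) that])
    finally show ?thesis using xi(2) by (simp add: l2norm_ns)
  qed
  show "bounded_op (r1 \<xi> a)"
    unfolding bounded_op_def
  proof (intro conjI ballI allI)
    show "\<exists>C. \<forall>f\<in>l2. l2norm (r1 \<xi> a f) \<le> C * l2norm f"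
      by (rule exI[of _ 1]) (simp add: nb)
  qed (auto simp: l2_r1[unfolded r1_def] r1_def fun_eq_iff l2inner_add l2inner_scale xi)
  show "opnorm (r1 \<xi> a) \<le> 1"
    by (rule opnorm_le) (use nb in force)
qed



definition sg :: "'b set \<Rightarrow> 'b \<Rightarrow> complex" where
  "sg S j = (if j \<in> S then -1 else 1)"

definition tau :: "'b \<Rightarrow> 'b set \<Rightarrow> 'b set" where
  "tau a S = (if a \<in> S then S - {a} else insert a S)"

lemma tau_Pow: "a \<in> F \<Longrightarrow> S \<in> Pow F \<Longrightarrow> tau a S \<in> Pow F"
  unfolding tau_def by auto

lemma tau_tau: "tau a (tau a S) = S"
  unfolding tau_def by auto

lemma sg_tau_same: "sg (tau a S) a = - sg S a"
  unfolding sg_def tau_def by auto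

lemma sg_tau_other: "b \<noteq> a \<Longrightarrow> sg (tau a S) b = sg S b"
  unfolding sg_def tau_def by auto

lemma sum_Pow_tau:
  assumes "a \<in> F"
  shows "(\<Sum>S\<in>Pow F. g S) = (\<Sum>S\<in>Pow F. g (tau a S))"
  by (rule sum.reindex_bij_witness[of _ "tau a" "tau a"]) (use assms tau_Pow[OF assms] in \<open>auto simp: tau_tau\<close>)

lemma sg_sum1:
  assumes "a \<in> F"
  shows "(\<Sum>S\<in>Pow F. sg S a) = 0"
proof -
  have "(\<Sum>S\<in>Pow F. sg S a) = (\<Sum>S\<in>Pow F. sg (tau a S) a)" by (rule sum_Pow_tau[OF assms])
  also have "\<dots> = - (\<Sum>S\<in>Pow F. sg S a)" by (simp add: sg_tau_same sum_negf)
  finally show ?thesis by simp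
qed

lemma sg_sq: "sg S a * sg S a = 1"
  unfolding sg_def by auto

lemma sg_sum2:
  assumes "a \<in> F" "b \<in> F"
  shows "(\<Sum>S\<in>Pow F. sg S a * sg S b) = (if a = b then of_nat (card (Pow F)) else 0)"
proof (cases "a = b")
  case True
  then show ?thesis by (simp add: sg_sq)
next
  case False
  have "(\<Sum>S\<in>Pow F. sg S a * sg S b) = (\<Sum>S\<in>Pow F. sg (tau a S) a * sg (tau a S) b)"
    by (rule sum_Pow_tau[OF assms(1)])
  also have "\<dots> = - (\<Sum>S\<in>Pow F. sg S a * sg S b)"
    using False by (simp add: sg_tau_same sg_tau_other[of b a] sum_negf)
  finally show ?thesis using False by simp
qed

lemma sg_avg:
  assumes "finite F" "a \<in> F"
  shows "(\<Sum>S\<in>Pow F. sg S a * ((\<Sum>j\<in>F. sg S j * c j) + r)) = of_nat (card (Pow F)) * c a"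
proof -
  have "(\<Sum>S\<in>Pow F. sg S a * ((\<Sum>j\<in>F. sg S j * c j) + r))
      = (\<Sum>S\<in>Pow F. (\<Sum>j\<in>F. (sg S a * sg S j) * c j)) + (\<Sum>S\<in>Pow F. sg S a) * r"
    by (simp add: distrib_left sum.distrib sum_distrib_left sum_distrib_right mult.assoc)
  also have "\<dots> = (\<Sum>j\<in>F. (\<Sum>S\<in>Pow F. sg S a * sg S j) * c j)"
    by (simp add: sg_sum1[OF assms(2)] sum.swap[of _ F] sum_distrib_right)
  also have "\<dots> = (\<Sum>j\<in>F. (if a = j then of_nat (card (Pow F)) else 0) * c j)"
    by (rule sum.cong) (use assms in \<open>auto simp: sg_sum2\<close>)
  also have "\<dots> = (\<Sum>j\<in>F. if a = j then of_nat (card (Pow F)) * c j else 0)"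
    by (rule sum.cong) auto
  also have "\<dots> = of_nat (card (Pow F)) * c a"
    using assms by (simp add: sum.delta)
  finally show ?thesis .
qed

lemma bounded_op_zero: "bounded_op A \<Longrightarrow> A (\<lambda>x. 0) = (\<lambda>x. 0)"
  using bounded_op_hom[of A "\<lambda>x. 0" 0] by simp

lemma lin_sum:
  assumes A: "bounded_op A" and F: "finite F" and v: "\<And>j. j \<in> F \<Longrightarrow> v j \<in> l2"
  shows "(\<lambda>x. \<Sum>j\<in>F. c j * v j x) \<in> l2 \<and> A (\<lambda>x. \<Sum>j\<in>F. c j * v j x) = (\<lambda>x. \<Sum>j\<in>F. c j * A (v j) x)"
  using F v
proof (induction F rule: finite_induct)
  case empty
  then show ?case using bounded_op_zero[OF A] by simp
next
  case (insert a F)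
  have va: "(\<lambda>x. c a * v a x) \<in> l2" by (rule l2_scale) (use insert in auto)
  have vF: "(\<lambda>x. \<Sum>j\<in>F. c j * v j x) \<in> l2" using insert by auto
  have eq: "(\<lambda>x. \<Sum>j\<in>insert a F. c j * v j x) = (\<lambda>x. c a * v a x + (\<Sum>j\<in>F. c j * v j x))"
    using insert by simp
  show ?case unfolding eq
  proof
    show "(\<lambda>x. c a * v a x + (\<Sum>j\<in>F. c j * v j x)) \<in> l2" by (rule l2_add[OF va vF])
    have "A (\<lambda>x. c a * v a x + (\<Sum>j\<in>F. c j * v j x)) = (\<lambda>x. A (\<lambda>x. c a * v a x) x + A (\<lambda>x. \<Sum>j\<in>F. c j * v j x) x)"
      by (rule bounded_op_add[OF A va vF])
    also have "\<dots> = (\<lambda>x. \<Sum>j\<in>insert a F. c j * A (v j) x)"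
      using insert bounded_op_hom[OF A, of "v a" "c a"] by auto
    finally show "A (\<lambda>x. c a * v a x + (\<Sum>j\<in>F. c j * v j x)) = (\<lambda>x. \<Sum>j\<in>insert a F. c j * A (v j) x)" .
  qed
qed



definition colr :: "('a \<times> 'b \<Rightarrow> complex) \<Rightarrow> 'b \<Rightarrow> ('a \<times> 'b \<Rightarrow> complex)" where
  "colr \<psi> a = (\<lambda>x. if snd x = a then \<psi> x else 0)"

definition rest :: "'b set \<Rightarrow> ('a \<times> 'b \<Rightarrow> complex) \<Rightarrow> ('a \<times> 'b \<Rightarrow> complex)" where
  "rest F \<psi> = (\<lambda>x. if snd x \<in> F then 0 else \<psi> x)"

lemma l2_restrict: "\<psi> \<in> l2 \<Longrightarrow> (\<lambda>x. if P x then \<psi> x else 0) \<in> l2"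
  unfolding l2_iff
  by (rule summable_on_comparison_test[of "\<lambda>x. (cmod (\<psi> x))\<^sup>2"]) auto

lemma l2_colr: "\<psi> \<in> l2 \<Longrightarrow> colr \<psi> a \<in> l2"
  unfolding colr_def by (rule l2_restrict)

lemma l2_rest: "\<psi> \<in> l2 \<Longrightarrow> rest F \<psi> \<in> l2"
proof -
  assume p: "\<psi> \<in> l2"
  have "rest F \<psi> = (\<lambda>x. if snd x \<notin> F then \<psi> x else 0)" unfolding rest_def by auto
  thus ?thesis using l2_restrict[OF p] by simp
qed

lemma ns_of_inner: "\<xi> \<in> l2 \<Longrightarrow> l2inner \<xi> \<xi> = 1 \<Longrightarrow> ns \<xi> = 1"
proof -
  assume x: "\<xi> \<in> l2" "l2inner \<xi> \<xi> = 1"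
  have e: "(\<lambda>j. cnj (\<xi> j) * \<xi> j) = (\<lambda>j. complex_of_real ((cmod (\<xi> j))\<^sup>2))"
    by (rule ext) (metis complex_norm_square mult.commute)
  have "((\<lambda>j. complex_of_real ((cmod (\<xi> j))\<^sup>2)) has_sum complex_of_real (ns \<xi>)) UNIV"
    unfolding ns_def by (rule has_sum_of_real) (use x in \<open>simp add: l2_iff\<close>)
  hence "l2inner \<xi> \<xi> = complex_of_real (ns \<xi>)" unfolding l2inner_def e by (rule infsumI)
  thus ?thesis using x by simp
qed

context
  fixes A :: "('a \<times> 'b \<Rightarrow> complex) \<Rightarrow> ('a \<times> 'b \<Rightarrow> complex)" and \<epsilon> :: real
  assumes A: "bounded_op A" and eps: "\<epsilon> \<ge> 0"
    and H: "\<forall>B :: ('b \<Rightarrow> complex) \<Rightarrow> ('b \<Rightarrow> complex). bounded_op B \<longrightarrow>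
           opnorm (\<lambda>f x. A (id_tensor B f) x - id_tensor B (A f) x) \<le> \<epsilon> * opnorm B"
begin

lemma colB:
  assumes xi: "\<xi> \<in> l2" "l2inner \<xi> \<xi> = 1" and psi: "\<psi> \<in> l2" and G: "finite G"
    and Ga: "\<And>x. x \<in> G \<Longrightarrow> snd x = a"
  shows "cmod (\<Sum>x\<in>G. cnj (\<phi> x) * (partial_vec A \<xi> (\<lambda>i. \<psi> (i, a)) (fst x) - A (colr \<psi> a) x))
     \<le> \<epsilon> * sqrt (\<Sum>x\<in>G. (cmod (\<phi> x))\<^sup>2) * l2norm (\<lambda>i. \<psi> (i, a))"
proof -
  let ?u = "\<lambda>i. \<psi> (i, a)"
  let ?f = "\<lambda>(i,j). ?u i * \<xi> j"
  let ?R = "r1 \<xi> a"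
  have u: "?u \<in> l2" by (rule col_l2[OF psi])
  have nsx: "ns \<xi> = 1" by (rule ns_of_inner[OF xi])
  have f: "?f \<in> l2" and nsf: "ns ?f = ns ?u" using tens_l2[OF u xi(1)] nsx by auto
  have R: "bounded_op ?R" "opnorm ?R \<le> 1" using bounded_r1[OF xi(1) nsx] by auto
  define w where "w = (\<lambda>x. A (id_tensor ?R ?f) x - id_tensor ?R (A ?f) x)"
  obtain CR where CR: "CR \<ge> 0" "\<And>f. f \<in> l2 \<Longrightarrow> ns (?R f) \<le> CR * ns f"
    using bounded_op_bound[OF R(1)] by blast
  have idf: "id_tensor ?R ?f = colr \<psi> a"
  proof -
    have "l2inner \<xi> (\<lambda>j. \<psi> (i, a) * \<xi> j) = \<psi> (i, a)" for i
      using l2inner_scale[of \<xi> "\<psi> (i,a)" \<xi>] xi(2) by simp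
    thus ?thesis unfolding id_tensor_def r1_def colr_def by (auto simp: fun_eq_iff)
  qed
  have wl2: "w \<in> l2" unfolding w_def
    by (rule l2_diff[OF bounded_op_l2[OF A] id_tensor_l2(1)[OF R(1) bounded_op_l2[OF A f] CR]])
       (rule id_tensor_l2(1)[OF R(1) f CR])
  have wn: "l2norm w \<le> \<epsilon> * l2norm ?u"
  proof -
    have "l2norm w \<le> \<epsilon> * opnorm ?R * l2norm ?f" unfolding w_def
      by (rule commutator_bound[OF A R(1) H f])
    also have "\<dots> \<le> \<epsilon> * 1 * l2norm ?f"
      by (rule mult_right_mono[OF mult_left_mono[OF R(2) eps]]) (simp add: l2norm_nonneg)
    finally show ?thesis by (simp add: l2norm_ns nsf)
  qed
  have wx: "w x = A (colr \<psi> a) x - partial_vec A \<xi> ?u (fst x)" if "snd x = a" for x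
    using that unfolding w_def idf
    by (cases x) (simp add: id_tensor_def r1_def partial_vec_def l2inner_def)
  have "(\<Sum>x\<in>G. cnj (\<phi> x) * (partial_vec A \<xi> ?u (fst x) - A (colr \<psi> a) x))
      = - (\<Sum>x\<in>G. cnj (\<phi> x) * w x)"
    by (simp add: wx Ga sum_negf[symmetric] algebra_simps)
  hence "cmod (\<Sum>x\<in>G. cnj (\<phi> x) * (partial_vec A \<xi> ?u (fst x) - A (colr \<psi> a) x))
      = cmod (\<Sum>x\<in>G. cnj (\<phi> x) * w x)" by simp
  also have "\<dots> \<le> sqrt (\<Sum>x\<in>G. (cmod (\<phi> x))\<^sup>2) * l2norm w" by (rule finite_CS[OF G wl2])
  also have "\<dots> \<le> sqrt (\<Sum>x\<in>G. (cmod (\<phi> x))\<^sup>2) * (\<epsilon> * l2norm ?u)"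
    by (rule mult_left_mono[OF wn]) (auto intro: sum_nonneg)
  finally show ?thesis by (simp add: algebra_simps)
qed

end


context
  fixes A :: "('a \<times> 'b \<Rightarrow> complex) \<Rightarrow> ('a \<times> 'b \<Rightarrow> complex)" and \<epsilon> :: real
  assumes A: "bounded_op A" and eps: "\<epsilon> \<ge> 0"
    and H: "\<forall>B :: ('b \<Rightarrow> complex) \<Rightarrow> ('b \<Rightarrow> complex). bounded_op B \<longrightarrow>
           opnorm (\<lambda>f x. A (id_tensor B f) x - id_tensor B (A f) x) \<le> \<epsilon> * opnorm B"
begin

lemma pinch:
  assumes G: "finite G" and psi: "\<psi> \<in> l2"
  shows "cmod ((\<Sum>x\<in>G. cnj (\<phi> x) * A \<psi> x) - (\<Sum>x\<in>G. cnj (\<phi> x) * A (colr \<psi> (snd x)) x))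
     \<le> \<epsilon> * sqrt (\<Sum>x\<in>G. (cmod (\<phi> x))\<^sup>2) * l2norm \<psi>"
proof -
  define F where "F = snd ` G"
  have F: "finite F" unfolding F_def using G by simp
  define N where "N = card (Pow F)"
  have Npos: "N > 0" unfolding N_def using F by (auto simp: card_gt_0_iff)
  let ?s = "sqrt (\<Sum>x\<in>G. (cmod (\<phi> x))\<^sup>2)"
  let ?T2 = "\<Sum>x\<in>G. cnj (\<phi> x) * A \<psi> x"
  let ?D = "\<Sum>x\<in>G. cnj (\<phi> x) * A (colr \<psi> (snd x)) x"
  define Q where "Q S = (\<Sum>x\<in>G. cnj (\<phi> x) * (sg S (snd x) * A (id_tensor (fl S) \<psi>) x))" for S
  have sgfl: "id_tensor (fl S) h = (\<lambda>x. sg S (snd x) * h x)" for S h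
    unfolding id_tensor_fl sg_def by simp
  have sgr: "cnj (sg S j) = sg S j" "sg S j * sg S j = 1" "cmod (sg S j) = 1" for S j
    unfolding sg_def by auto
  have bnd: "cmod (Q S - ?T2) \<le> \<epsilon> * ?s * l2norm \<psi>" for S
  proof -
    define w where "w = (\<lambda>x. A (id_tensor (fl S) \<psi>) x - id_tensor (fl S) (A \<psi>) x)"
    obtain C where C: "C \<ge> 0" "\<And>f. f \<in> l2 \<Longrightarrow> ns (fl S f) \<le> C * ns f"
      using bounded_op_bound[OF bounded_fl] by blast
    have wl2: "w \<in> l2" unfolding w_def
      by (rule l2_diff[OF bounded_op_l2[OF A] id_tensor_l2(1)[OF bounded_fl bounded_op_l2[OF A psi] C]])
         (rule id_tensor_l2(1)[OF bounded_fl psi C])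
    have wn: "l2norm w \<le> \<epsilon> * l2norm \<psi>"
    proof -
      have "l2norm w \<le> \<epsilon> * opnorm (fl S) * l2norm \<psi>" unfolding w_def
        by (rule commutator_bound[OF A bounded_fl H psi])
      also have "\<dots> \<le> \<epsilon> * 1 * l2norm \<psi>"
        by (rule mult_right_mono[OF mult_left_mono[OF opnorm_fl eps]]) (simp add: l2norm_nonneg)
      finally show ?thesis by simp
    qed
    have "Q S - ?T2 = (\<Sum>x\<in>G. cnj (sg S (snd x) * \<phi> x) * w x)"
    proof -
      have "cnj (\<phi> x) * (sg S (snd x) * A (id_tensor (fl S) \<psi>) x) - cnj (\<phi> x) * A \<psi> x
          = cnj (sg S (snd x) * \<phi> x) * w x" for x
      proof -
        have "cnj (sg S (snd x) * \<phi> x) * w x = cnj (\<phi> x) * (sg S (snd x) * A (id_tensor (fl S) \<psi>) x)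
            - cnj (\<phi> x) * ((sg S (snd x) * sg S (snd x)) * A \<psi> x)"
          unfolding w_def sgfl by (simp add: sgr(1) algebra_simps)
        thus ?thesis by (simp add: sgr(2))
      qed
      thus ?thesis unfolding Q_def by (simp add: sum_subtractf[symmetric])
    qed
    hence "cmod (Q S - ?T2) \<le> sqrt (\<Sum>x\<in>G. (cmod (sg S (snd x) * \<phi> x))\<^sup>2) * l2norm w"
      using finite_CS[OF G wl2, of "\<lambda>x. sg S (snd x) * \<phi> x"] by simp
    also have "\<dots> = ?s * l2norm w" by (simp add: norm_mult sgr(3))
    also have "\<dots> \<le> ?s * (\<epsilon> * l2norm \<psi>)" by (rule mult_left_mono[OF wn]) (auto intro: sum_nonneg)
    finally show ?thesis by (simp add: algebra_simps)
  qed
  have colrl2: "colr \<psi> j \<in> l2" for j by (rule l2_colr[OF psi])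
  have restl2: "rest F \<psi> \<in> l2" by (rule l2_rest[OF psi])
  have dec: "id_tensor (fl S) \<psi> = (\<lambda>x. (\<Sum>j\<in>F. sg S j * colr \<psi> j x) + rest F \<psi> x)"
    if S: "S \<subseteq> F" for S
  proof (rule ext)
    fix x :: "'a \<times> 'b"
    have "(\<Sum>j\<in>F. sg S j * colr \<psi> j x) = (\<Sum>j\<in>F. if snd x = j then sg S j * \<psi> x else 0)"
      unfolding colr_def by (rule sum.cong) auto
    also have "\<dots> = (if snd x \<in> F then sg S (snd x) * \<psi> x else 0)"
      using F by (simp add: sum.delta)
    finally show "id_tensor (fl S) \<psi> x = (\<Sum>j\<in>F. sg S j * colr \<psi> j x) + rest F \<psi> x"
      using S unfolding sgfl rest_def by (auto simp: sg_def)
  qed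
  have AM: "A (id_tensor (fl S) \<psi>) x = (\<Sum>j\<in>F. sg S j * A (colr \<psi> j) x) + A (rest F \<psi>) x"
    if S: "S \<subseteq> F" for S x
  proof -
    have L: "(\<lambda>x. \<Sum>j\<in>F. sg S j * colr \<psi> j x) \<in> l2 \<and>
        A (\<lambda>x. \<Sum>j\<in>F. sg S j * colr \<psi> j x) = (\<lambda>x. \<Sum>j\<in>F. sg S j * A (colr \<psi> j) x)"
      by (rule lin_sum[OF A F colrl2])
    show ?thesis unfolding dec[OF S] bounded_op_add[OF A L[THEN conjunct1] restl2] L[THEN conjunct2] by simp
  qed
  have avg: "(\<Sum>S\<in>Pow F. Q S) = of_nat N * ?D"
  proof -
    have "(\<Sum>S\<in>Pow F. Q S) = (\<Sum>x\<in>G. cnj (\<phi> x) * (\<Sum>S\<in>Pow F. sg S (snd x) *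
            ((\<Sum>j\<in>F. sg S j * A (colr \<psi> j) x) + A (rest F \<psi>) x)))"
      unfolding Q_def by (simp add: AM sum.swap[of _ "Pow F"] sum_distrib_left)
    also have "\<dots> = (\<Sum>x\<in>G. cnj (\<phi> x) * (of_nat N * A (colr \<psi> (snd x)) x))"
    proof (rule sum.cong[OF refl])
      fix x assume "x \<in> G"
      hence "snd x \<in> F" unfolding F_def by simp
      show "cnj (\<phi> x) * (\<Sum>S\<in>Pow F. sg S (snd x) *
            ((\<Sum>j\<in>F. sg S j * A (colr \<psi> j) x) + A (rest F \<psi>) x))
          = cnj (\<phi> x) * (of_nat N * A (colr \<psi> (snd x)) x)"
        unfolding sg_avg[OF F \<open>snd x \<in> F\<close>] N_def by (rule refl)
    qed
    also have "\<dots> = of_nat N * ?D" unfolding sum_distrib_left by (simp only: mult.left_commute)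
    finally show ?thesis .
  qed
  have "(\<Sum>S\<in>Pow F. ?T2 - Q S) = (\<Sum>S\<in>Pow F. ?T2) - (\<Sum>S\<in>Pow F. Q S)"
    by (rule sum_subtractf)
  also have "\<dots> = of_nat N * ?T2 - of_nat N * ?D" unfolding avg by (simp add: N_def)
  also have "\<dots> = of_nat N * (?T2 - ?D)" by (simp only: right_diff_distrib)
  finally have eqN: "of_nat N * (?T2 - ?D) = (\<Sum>S\<in>Pow F. ?T2 - Q S)" by (rule sym)
  have "real N * cmod (?T2 - ?D) = cmod (\<Sum>S\<in>Pow F. ?T2 - Q S)"
    using arg_cong[where f=cmod, OF eqN] by (simp only: norm_mult norm_of_nat)
  also have "\<dots> \<le> (\<Sum>S\<in>Pow F. cmod (?T2 - Q S))" by (rule norm_sum)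
  also have "\<dots> \<le> (\<Sum>S\<in>Pow F. \<epsilon> * ?s * l2norm \<psi>)"
    by (rule sum_mono) (subst norm_minus_commute, rule bnd)
  also have "\<dots> = real N * (\<epsilon> * ?s * l2norm \<psi>)" by (simp add: N_def)
  finally have "real N * cmod (?T2 - ?D) \<le> real N * (\<epsilon> * ?s * l2norm \<psi>)" .
  thus ?thesis using Npos by (simp only: mult_le_cancel_left_pos of_nat_0_less_iff)
qed

end


context
  fixes A :: "('a \<times> 'b \<Rightarrow> complex) \<Rightarrow> ('a \<times> 'b \<Rightarrow> complex)" and \<epsilon> :: real
  assumes A: "bounded_op A" and eps: "\<epsilon> \<ge> 0"
    and H: "\<forall>B :: ('b \<Rightarrow> complex) \<Rightarrow> ('b \<Rightarrow> complex). bounded_op B \<longrightarrow>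
           opnorm (\<lambda>f x. A (id_tensor B f) x - id_tensor B (A f) x) \<le> \<epsilon> * opnorm B"
begin

lemma single:
  assumes xi: "\<xi> \<in> l2" "l2inner \<xi> \<xi> = 1" and G: "finite G" and psi: "\<psi> \<in> l2"
  shows "cmod (\<Sum>x\<in>G. cnj (\<phi> x) * (partial_vec A \<xi> (\<lambda>i. \<psi> (i, snd x)) (fst x) - A \<psi> x))
     \<le> 2 * \<epsilon> * sqrt (\<Sum>x\<in>G. (cmod (\<phi> x))\<^sup>2) * l2norm \<psi>"
proof -
  define F where "F = snd ` G"
  have F: "finite F" unfolding F_def using G by simp
  let ?s = "sqrt (\<Sum>x\<in>G. (cmod (\<phi> x))\<^sup>2)"
  let ?Ga = "\<lambda>a. {x. x \<in> G \<and> snd x = a}"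
  let ?pv = "\<lambda>x. partial_vec A \<xi> (\<lambda>i. \<psi> (i, snd x)) (fst x)"
  let ?T1D = "\<Sum>x\<in>G. cnj (\<phi> x) * (?pv x - A (colr \<psi> (snd x)) x)"
  define sa where "sa a = sqrt (\<Sum>x\<in>?Ga a. (cmod (\<phi> x))\<^sup>2)" for a
  define ta where "ta a = l2norm (\<lambda>i. \<psi> (i, a))" for a
  have grp: "(\<Sum>a\<in>F. \<Sum>x\<in>?Ga a. h x) = (\<Sum>x\<in>G. h x)" for h :: "'a \<times> 'b \<Rightarrow> 'c::comm_monoid_add"
    by (rule sum.group[OF G F]) (simp add: F_def)
  have "?T1D = (\<Sum>a\<in>F. \<Sum>x\<in>?Ga a. cnj (\<phi> x) * (partial_vec A \<xi> (\<lambda>i. \<psi> (i, a)) (fst x) - A (colr \<psi> a) x))"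
    unfolding grp[symmetric] by (rule sum.cong[OF refl], rule sum.cong) auto
  hence "cmod ?T1D \<le> (\<Sum>a\<in>F. cmod (\<Sum>x\<in>?Ga a. cnj (\<phi> x) * (partial_vec A \<xi> (\<lambda>i. \<psi> (i, a)) (fst x) - A (colr \<psi> a) x)))"
    by (simp add: norm_sum)
  also have "\<dots> \<le> (\<Sum>a\<in>F. \<epsilon> * sa a * ta a)"
    unfolding sa_def ta_def by (rule sum_mono, rule colB[OF A eps H xi psi]) (use G in auto)
  also have "\<dots> = \<epsilon> * (\<Sum>a\<in>F. \<bar>sa a\<bar> * \<bar>ta a\<bar>)"
  proof -
    have "sa a \<ge> 0" "ta a \<ge> 0" for a unfolding sa_def ta_def by (auto intro: sum_nonneg simp: l2norm_nonneg)
    thus ?thesis by (simp add: sum_distrib_left mult.assoc)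
  qed
  also have "\<dots> \<le> \<epsilon> * (L2_set sa F * L2_set ta F)"
    by (rule mult_left_mono[OF L2_set_mult_ineq eps])
  also have "\<dots> \<le> \<epsilon> * (?s * l2norm \<psi>)"
  proof -
    have "L2_set sa F = ?s" unfolding L2_set_def sa_def
      by (simp add: sum_nonneg grp)
    moreover have "L2_set ta F \<le> l2norm \<psi>" unfolding L2_set_def ta_def l2norm_ns
      using cols_sum_le[OF psi F] by (simp add: ns_nonneg)
    moreover have "?s \<ge> 0" by (auto intro: sum_nonneg)
    ultimately show ?thesis
      by (intro mult_left_mono[OF _ eps]) (simp add: mult_left_mono)
  qed
  finally have b1: "cmod ?T1D \<le> \<epsilon> * ?s * l2norm \<psi>" by (simp add: mult.assoc)
  have b2: "cmod ((\<Sum>x\<in>G. cnj (\<phi> x) * A \<psi> x) - (\<Sum>x\<in>G. cnj (\<phi> x) * A (colr \<psi> (snd x)) x))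
     \<le> \<epsilon> * ?s * l2norm \<psi>" by (rule pinch[OF A eps H G psi])
  have "(\<Sum>x\<in>G. cnj (\<phi> x) * (?pv x - A \<psi> x))
     = ?T1D - ((\<Sum>x\<in>G. cnj (\<phi> x) * A \<psi> x) - (\<Sum>x\<in>G. cnj (\<phi> x) * A (colr \<psi> (snd x)) x))"
    by (simp add: sum_subtractf[symmetric] right_diff_distrib)
  hence "cmod (\<Sum>x\<in>G. cnj (\<phi> x) * (?pv x - A \<psi> x)) \<le> cmod ?T1D + cmod ((\<Sum>x\<in>G. cnj (\<phi> x) * A \<psi> x) - (\<Sum>x\<in>G. cnj (\<phi> x) * A (colr \<psi> (snd x)) x))"
    by (simp only: norm_triangle_ineq4)
  thus ?thesis using b1 b2 by simp
qed

end


lemma has_sum_finsum: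
  fixes g :: "'x \<Rightarrow> 'k \<Rightarrow> 'c::topological_comm_monoid_add"
  assumes "finite G" "\<And>x. x \<in> G \<Longrightarrow> ((\<lambda>k. g x k) has_sum S x) K"
  shows "((\<lambda>k. \<Sum>x\<in>G. g x k) has_sum (\<Sum>x\<in>G. S x)) K"
  using assms
proof (induction G rule: finite_induct)
  case empty
  then show ?case by simp
next
  case (insert a F)
  have "(g a has_sum S a) K" using insert by auto
  moreover have "((\<lambda>k. \<Sum>x\<in>F. g x k) has_sum (\<Sum>x\<in>F. S x)) K" using insert by auto
  ultimately have "((\<lambda>k. g a k + (\<Sum>x\<in>F. g x k)) has_sum (S a + (\<Sum>x\<in>F. S x))) K"
    by (rule has_sum_add)
  thus ?case using insert by simp
qed

lemma has_sum_diff':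
  fixes f g :: "'k \<Rightarrow> complex"
  assumes "(f has_sum a) K" "(g has_sum b) K"
  shows "((\<lambda>k. f k - g k) has_sum (a - b)) K"
  using has_sum_add[OF assms(1) has_sum_uminusI[OF assms(2)]] by simp

lemma tensor_id_at: "tensor_id C f x = C (\<lambda>i'. f (i', snd x)) (fst x)"
  by (cases x) (simp add: tensor_id_def)

theorem mainTheorem6:
  fixes A :: "('a \<times> 'b \<Rightarrow> complex) \<Rightarrow> ('a \<times> 'b \<Rightarrow> complex)"
    and \<rho> :: "'k \<Rightarrow> real" and \<xi> :: "'k \<Rightarrow> 'b \<Rightarrow> complex" and K :: "'k set"
    and \<epsilon> :: real
  assumes "bounded_op A"
    and "\<epsilon> \<ge> 0"
    and "\<forall>k\<in>K. \<rho> k \<ge> 0"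
    and "(\<rho> has_sum 1) K"
    and "\<forall>k\<in>K. \<xi> k \<in> l2"
    and "\<forall>k\<in>K. \<forall>k'\<in>K. l2inner (\<xi> k) (\<xi> k') = (if k = k' then 1 else 0)"
    and "\<forall>B :: ('b \<Rightarrow> complex) \<Rightarrow> ('b \<Rightarrow> complex). bounded_op B \<longrightarrow>
           opnorm (\<lambda>f x. A (id_tensor B f) x - id_tensor B (A f) x) \<le> \<epsilon> * opnorm B"
  shows "opnorm (\<lambda>f x. tensor_id (partial_state \<rho> \<xi> K A) f x - A f x) \<le> 2 * \<epsilon>"
proof -
  note A = assms(1) and eps = assms(2) and rho = assms(3,4) and H = assms(7)
  have xi: "\<xi> k \<in> l2" "l2inner (\<xi> k) (\<xi> k) = 1" if "k \<in> K" for k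
    using assms(5,6) that by auto
  let ?X = "\<lambda>f x. tensor_id (partial_state \<rho> \<xi> K A) f x - A f x"
  let ?pv = "\<lambda>k f x. partial_vec A (\<xi> k) (\<lambda>i. f (i, snd x)) (fst x)"
  have rho1: "((\<lambda>k. complex_of_real (\<rho> k)) has_sum 1) K"
    using has_sum_of_real[OF rho(2)] by simp
  have MB: "cmod (\<Sum>x\<in>G. cnj (\<phi> x) * ?X f x) \<le> 2 * \<epsilon> * sqrt (\<Sum>x\<in>G. (cmod (\<phi> x))\<^sup>2) * l2norm f"
    if G: "finite G" and f: "f \<in> l2" for G \<phi> f
  proof -
    let ?M = "2 * \<epsilon> * sqrt (\<Sum>x\<in>G. (cmod (\<phi> x))\<^sup>2) * l2norm f"
    define c where "c k = (\<Sum>x\<in>G. cnj (\<phi> x) * (?pv k f x - A f x))" for k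
    have cb: "cmod (c k) \<le> ?M" if "k \<in> K" for k
      unfolding c_def by (rule single[OF A eps H xi[OF that] G f])
    have pw: "((\<lambda>k. complex_of_real (\<rho> k) * (?pv k f x - A f x)) has_sum ?X f x) K" for x
    proof -
      have pt: "cmod (?pv k f x - A f x) \<le> 2 * \<epsilon> * l2norm f" if "k \<in> K" for k
        using single[OF A eps H xi[OF that] _ f, of "{x}" "\<lambda>_. 1"] by simp
      have summ: "(\<lambda>k. complex_of_real (\<rho> k) * ?pv k f x) summable_on K"
      proof (rule abs_summable_summable)
        have "(\<lambda>k. \<rho> k * (cmod (A f x) + 2 * \<epsilon> * l2norm f)) summable_on K"
          by (rule summable_on_cmult_left) (use rho(2) in \<open>auto simp: has_sum_iff\<close>)
        thus "(\<lambda>k. norm (complex_of_real (\<rho> k) * ?pv k f x)) summable_on K"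
        proof (rule summable_on_comparison_test)
          fix k assume k: "k \<in> K"
          have "cmod (?pv k f x) \<le> cmod (A f x) + 2 * \<epsilon> * l2norm f"
            using pt[OF k] norm_triangle_ineq2[of "?pv k f x" "A f x"] by linarith
          thus "norm (complex_of_real (\<rho> k) * ?pv k f x) \<le> \<rho> k * (cmod (A f x) + 2 * \<epsilon> * l2norm f)"
            using rho(1) k by (simp add: norm_mult mult_left_mono)
        qed simp
      qed
      have h1: "((\<lambda>k. complex_of_real (\<rho> k) * ?pv k f x) has_sum
          partial_state \<rho> \<xi> K A (\<lambda>i. f (i, snd x)) (fst x)) K"
        using summ unfolding partial_state_def by (simp add: has_sum_infsum)
      have h2: "((\<lambda>k. complex_of_real (\<rho> k) * A f x) has_sum A f x) K"
        using has_sum_cmult_left[OF rho1, of "A f x"] by simp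
      show ?thesis using has_sum_diff'[OF h1 h2]
        by (simp add: right_diff_distrib tensor_id_at)
    qed
    have hs: "((\<lambda>k. complex_of_real (\<rho> k) * c k) has_sum (\<Sum>x\<in>G. cnj (\<phi> x) * ?X f x)) K"
    proof -
      have "((\<lambda>k. \<Sum>x\<in>G. cnj (\<phi> x) * (complex_of_real (\<rho> k) * (?pv k f x - A f x)))
          has_sum (\<Sum>x\<in>G. cnj (\<phi> x) * ?X f x)) K"
        by (rule has_sum_finsum[OF G]) (rule has_sum_cmult_right[OF pw])
      moreover have "(\<lambda>k. \<Sum>x\<in>G. cnj (\<phi> x) * (complex_of_real (\<rho> k) * (?pv k f x - A f x)))
          = (\<lambda>k. complex_of_real (\<rho> k) * c k)"
        unfolding c_def by (simp add: sum_distrib_left mult.left_commute)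
      ultimately show ?thesis by simp
    qed
    have hM: "((\<lambda>k. \<rho> k * ?M) has_sum ?M) K"
      using has_sum_cmult_left[OF rho(2), of ?M] by simp
    show ?thesis
    proof (rule norm_infsum_le[OF hs hM])
      fix k assume k: "k \<in> K"
      show "norm (complex_of_real (\<rho> k) * c k) \<le> \<rho> k * ?M"
        using cb[OF k] rho(1) k by (simp add: norm_mult mult_left_mono)
    qed
  qed
  show ?thesis
  proof (rule opnorm_le)
    fix f :: "'a \<times> 'b \<Rightarrow> complex" assume f: "f \<in> l2" and f1: "l2norm f \<le> 1"
    let ?b = "2 * \<epsilon> * l2norm f"
    have b0: "?b \<ge> 0" using eps by (simp add: l2norm_nonneg)
    have "ns (?X f) \<le> ?b\<^sup>2"
    proof (rule ns_le_finite)
      fix G :: "('a \<times> 'b) set" assume G: "finite G"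
      define s where "s = (\<Sum>x\<in>G. (cmod (?X f x))\<^sup>2)"
      have s0: "s \<ge> 0" unfolding s_def by (auto intro: sum_nonneg)
      have "(\<Sum>x\<in>G. cnj (?X f x) * ?X f x) = complex_of_real s"
      proof -
        have "(\<Sum>x\<in>G. cnj (?X f x) * ?X f x) = (\<Sum>x\<in>G. complex_of_real ((cmod (?X f x))\<^sup>2))"
          by (rule sum.cong[OF refl]) (metis complex_norm_square mult.commute)
        thus ?thesis unfolding s_def by (simp only: of_real_sum)
      qed
      hence "s \<le> ?b * sqrt s"
        using MB[OF G f, of "?X f"] s0 by (simp add: s_def[symmetric] mult.commute mult.left_commute)
      hence "sqrt s * sqrt s \<le> ?b * sqrt s" using s0 by simp
      hence "sqrt s \<le> ?b \<or> sqrt s = 0"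
        by (metis mult_right_le_imp_le real_sqrt_ge_zero s0 order_le_less)
      hence "sqrt s \<le> ?b" using b0 by auto
      hence "(sqrt s)\<^sup>2 \<le> ?b\<^sup>2" by (rule power_mono) (simp add: s0)
      thus "(\<Sum>x\<in>G. (cmod (?X f x))\<^sup>2) \<le> ?b\<^sup>2" unfolding s_def[symmetric] using s0 by simp
    qed simp
    hence "sqrt (ns (?X f)) \<le> sqrt (?b\<^sup>2)" by (rule real_sqrt_le_mono)
    moreover have "sqrt (?b\<^sup>2) = ?b" using b0 by (simp only: real_sqrt_abs abs_of_nonneg)
    ultimately have "l2norm (?X f) \<le> ?b" by (simp only: l2norm_ns)
    also have "?b \<le> 2 * \<epsilon>" using f1 eps by (simp add: mult_left_le)
    finally show "l2norm (?X f) \<le> 2 * \<epsilon>" .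
  qed
qed


end
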